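(* Let $F$ be a field with $\mathrm{char}\,F\neq 2$, and let $A$ be a flexible quadratic $F$-algebra. If for every $3$-dimensional subalgebra $B$ of $A$ the restriction of the norm $n$ of $A$ to $B$ is non-degenerate, then $A$ is von-Neumann finite and reversible.
   Context: Algebras are vector spaces with bilinear, not necessarily associative, multiplication, and are unital. $A$ is flexible if $a(ba)=(ab)a$ for all $a,b$; quadratic if $1,a,a^2$ are linearly dependent for all $a$. For a quadratic algebra with $\mathrm{char}\,F\ne2$, set $\mathrm{Im}\,A=\{u\in A\setminus F1: u^2\in F1\}\cup\{0\}$; then $A=F1\oplus\mathrm{Im}\,A$, and writing $a=\alpha+u$ with $\alpha\in F,u\in\mathrm{Im}\,A$, the norm is $n(a)=\alpha^2-(u,u)$, where $(u,v)\in F$ is the $F1$-component of $uv$ for $u,v\in \mathrm{Im}\,A$ (equivalently $n(a)=a\bar a$ with $\bar a=\alpha-u$). For a quadratic form $q$ on a space $V$ with $\langle x,y\rangle=q(x+y)-q(x)-q(y)$ and $V^\perp=\{x:\langle x,V\rangle=0\}$, $q$ is non-degenerate if $V^\perp=0$ or ($\dim V^\perp=1$ and $q(V^\perp)\neq0$). von-Neumann finite: $ab=1\Rightarrow ba=1$; reversible: $ab=0\Rightarrow ba=0$. *)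

theory Defs
  imports Complex_Main
begin

definition unital_algebra ::
  "('f::field \<Rightarrow> 'v::ab_group_add \<Rightarrow> 'v) \<Rightarrow> ('v \<Rightarrow> 'v \<Rightarrow> 'v) \<Rightarrow> 'v \<Rightarrow> bool" where
  "unital_algebra sc m e \<longleftrightarrow>
     vector_space sc \<and>
     (\<forall>x y z. m (x + y) z = m x z + m y z \<and> m x (y + z) = m x y + m x z) \<and>
     (\<forall>c x y. m (sc c x) y = sc c (m x y) \<and> m x (sc c y) = sc c (m x y)) \<and>
     (\<forall>x. m e x = x \<and> m x e = x)"

definition flexible_alg :: "('v \<Rightarrow> 'v \<Rightarrow> 'v) \<Rightarrow> bool" where
  "flexible_alg m \<longleftrightarrow> (\<forall>a b. m a (m b a) = m (m a b) a)"

definition quadratic_alg ::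
  "('f::field \<Rightarrow> 'v::ab_group_add \<Rightarrow> 'v) \<Rightarrow> ('v \<Rightarrow> 'v \<Rightarrow> 'v) \<Rightarrow> 'v \<Rightarrow> bool" where
  "quadratic_alg sc m e \<longleftrightarrow>
     (\<forall>a. \<exists>\<alpha> \<beta> \<gamma>. (\<alpha>, \<beta>, \<gamma>) \<noteq> (0, 0, 0) \<and> sc \<alpha> e + sc \<beta> a + sc \<gamma> (m a a) = 0)"

definition scalars :: "('f \<Rightarrow> 'v \<Rightarrow> 'v) \<Rightarrow> 'v \<Rightarrow> 'v set" where
  "scalars sc e = range (\<lambda>c. sc c e)"

definition im_part ::
  "('f::field \<Rightarrow> 'v::ab_group_add \<Rightarrow> 'v) \<Rightarrow> ('v \<Rightarrow> 'v \<Rightarrow> 'v) \<Rightarrow> 'v \<Rightarrow> 'v set" where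
  "im_part sc m e = {u. u \<notin> scalars sc e \<and> m u u \<in> scalars sc e} \<union> {0}"

text \<open>Norm: for a = alpha + u with u in Im A, n(a) = alpha^2 - (u,u), where u u = (u,u) 1.\<close>
definition alg_norm ::
  "('f::field \<Rightarrow> 'v::ab_group_add \<Rightarrow> 'v) \<Rightarrow> ('v \<Rightarrow> 'v \<Rightarrow> 'v) \<Rightarrow> 'v \<Rightarrow> 'v \<Rightarrow> 'f" where
  "alg_norm sc m e a =
     (THE x. \<exists>\<alpha> u. u \<in> im_part sc m e \<and> a = sc \<alpha> e + u \<and> m u u = sc (\<alpha>\<^sup>2 - x) e)"

definition subalgebra ::
  "('f::field \<Rightarrow> 'v::ab_group_add \<Rightarrow> 'v) \<Rightarrow> ('v \<Rightarrow> 'v \<Rightarrow> 'v) \<Rightarrow> 'v \<Rightarrow> 'v set \<Rightarrow> bool" where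
  "subalgebra sc m e B \<longleftrightarrow> module.subspace sc B \<and> e \<in> B \<and> (\<forall>x\<in>B. \<forall>y\<in>B. m x y \<in> B)"

definition polar :: "('v::ab_group_add \<Rightarrow> 'f::field) \<Rightarrow> 'v \<Rightarrow> 'v \<Rightarrow> 'f" where
  "polar q x y = q (x + y) - q x - q y"

definition radical :: "('v::ab_group_add \<Rightarrow> 'f::field) \<Rightarrow> 'v set \<Rightarrow> 'v set" where
  "radical q V = {x \<in> V. \<forall>y\<in>V. polar q x y = 0}"

definition nondegenerate_on ::
  "('f::field \<Rightarrow> 'v::ab_group_add \<Rightarrow> 'v) \<Rightarrow> ('v \<Rightarrow> 'f) \<Rightarrow> 'v set \<Rightarrow> bool" where
  "nondegenerate_on sc q V \<longleftrightarrow>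
     radical q V = {0} \<or>
     (vector_space.dim sc (radical q V) = 1 \<and> (\<exists>x\<in>radical q V. q x \<noteq> 0))"

definition von_neumann_finite :: "('v \<Rightarrow> 'v \<Rightarrow> 'v) \<Rightarrow> 'v \<Rightarrow> bool" where
  "von_neumann_finite m e \<longleftrightarrow> (\<forall>a b. m a b = e \<longrightarrow> m b a = e)"

definition reversible :: "('v::zero \<Rightarrow> 'v \<Rightarrow> 'v) \<Rightarrow> bool" where
  "reversible m \<longleftrightarrow> (\<forall>a b. m a b = 0 \<longrightarrow> m b a = 0)"

end

theory Submission
  imports Defs
begin

locale alg = vector_space sc for sc :: "'f::field \<Rightarrow> 'v::ab_group_add \<Rightarrow> 'v" +
  fixes m :: "'v\<Rightarrow>'v\<Rightarrow>'v" and e :: 'v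
  assumes addL: "m (x+y) z = m x z + m y z" and addR: "m x (y + z) = m x y + m x z"
  and scL: "m (sc c x) y = sc c (m x y)" and scR: "m x (sc c y) = sc c (m x y)"
  and unitL: "m e x = x" and unitR: "m x e = x"
begin

lemma zeroL[simp]: "m 0 y = 0" using scL[of 0 0 y] by simp
lemma zeroR[simp]: "m y 0 = 0" using scR[of y 0 0] by simp
lemma negL: "m (-x) y = - m x y" using addL[of x "-x" y] by (simp add: eq_neg_iff_add_eq_0 add.commute)
lemma negR: "m y (-x) = - m y x" using addR[of y x "-x"] by (simp add: eq_neg_iff_add_eq_0 add.commute)
lemma diffL: "m (x - z) y = m x y - m z y" using addL[of x "-z" y] by (simp add: negL)
lemma diffR: "m y (x - z) = m y x - m y z" using addR[of y x "-z"] by (simp add: negR)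

end

locale alg3 = alg sc m e for sc :: "'f::field \<Rightarrow> 'v::ab_group_add \<Rightarrow> 'v" and m e +
  fixes u v :: 'v
  assumes indep: "sc g e + sc x u + sc y v = 0 \<Longrightarrow> g = 0 \<and> x = 0 \<and> y = 0"
begin

definition L where "L g x y = sc g e + sc x u + sc y v"

lemma L_add: "L g x y + L g' x' y' = L (g+g') (x+x') (y+y')"
  by (simp add: L_def scale_left_distrib algebra_simps)
lemma L_scale: "sc k (L g x y) = L (k*g) (k*x) (k*y)"
  by (simp add: L_def scale_right_distrib)
lemma L_neg: "- L g x y = L (-g) (-x) (-y)"
  by (simp add: L_def algebra_simps)
lemma L_diff: "L g x y - L g' x' y' = L (g-g') (x-x') (y-y')"
  by (simp add: L_def scale_left_diff_distrib algebra_simps)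
lemma L_eq: "L g x y = L g' x' y' \<longleftrightarrow> g = g' \<and> x = x' \<and> y = y'"
proof
  assume "L g x y = L g' x' y'"
  hence "L (g-g') (x-x') (y-y') = 0" using L_diff[of g x y g' x' y'] by simp
  thus "g = g' \<and> x = x' \<and> y = y'" using indep[of "g-g'" "x-x'" "y-y'"] unfolding L_def by simp
qed auto
lemma L_e: "L g 0 0 = sc g e" by (simp add: L_def)
lemma L_u: "L 0 1 0 = u" by (simp add: L_def)
lemma L_v: "L 0 0 1 = v" by (simp add: L_def)
lemma L_0: "L 0 0 0 = 0" by (simp add: L_def)
lemma e_nz: "e \<noteq> 0" using indep[of 1 0 0] by auto

lemma mL_left: "m (L g x y) z = sc g z + sc x (m u z) + sc y (m v z)"
  by (simp add: L_def addL scL unitL)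
lemma mL_right: "m z (L g x y) = sc g z + sc x (m z u) + sc y (m z v)"
  by (simp add: L_def addR scR unitR)

lemma prod:
  assumes UU: "m u u = L a1 a2 a3" and UV: "m u v = L b1 b2 b3"
    and VU: "m v u = L c1 c2 c3" and VV: "m v v = L d1 d2 d3"
  shows "m (L g x y) (L g' x' y') =
    L (g*g' + x*x'*a1 + x*y'*b1 + y*x'*c1 + y*y'*d1)
      (g*x' + x*g' + x*x'*a2 + x*y'*b2 + y*x'*c2 + y*y'*d2)
      (g*y' + y*g' + x*x'*a3 + x*y'*b3 + y*x'*c3 + y*y'*d3)"
proof -
  have mu: "m u (L g' x' y') = L (x'*a1 + y'*b1) (g' + x'*a2 + y'*b2) (x'*a3 + y'*b3)"
    unfolding mL_right UU UV using L_u
    by (metis (no_types, lifting) L_add L_scale add_0 mult_1_right mult_zero_right)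
  have mv: "m v (L g' x' y') = L (x'*c1 + y'*d1) (x'*c2 + y'*d2) (g' + x'*c3 + y'*d3)"
    unfolding mL_right VU VV using L_v
    by (metis (no_types, lifting) L_add L_scale add_0 mult_1_right mult_zero_right add.commute)
  show ?thesis unfolding mL_left mu mv L_scale L_add
    by (simp add: L_eq algebra_simps)
qed


lemma L_in_span: "L g x y \<in> span {e,u,v}"
  unfolding L_def by (intro span_add span_scale span_base) auto

lemma span_L: "z \<in> span {e,u,v} \<Longrightarrow> \<exists>g x y. z = L g x y"
proof -
  assume "z \<in> span {e,u,v}"
  then obtain k where "z - sc k e \<in> span {u,v}" by (auto simp: span_breakdown_eq)
  then obtain l where "z - sc k e - sc l u \<in> span {v}" by (auto simp: span_breakdown_eq)
  then obtain r where "z - sc k e - sc l u = sc r v" by (auto simp: span_singleton)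
  hence "z = L k l r" unfolding L_def by (simp add: algebra_simps)
  thus ?thesis by blast
qed

lemma dim3: "dim (span {e,u,v}) = 3"
proof -
  have d: "e \<noteq> u" "e \<noteq> v" "u \<noteq> v"
    using L_eq[of 1 0 0 0 1 0] L_eq[of 1 0 0 0 0 1] L_eq[of 0 1 0 0 0 1] L_e L_u L_v
    by (auto simp: L_def)
  have "v \<notin> span {}" using L_eq[of 0 0 1 0 0 0] L_v L_0 by auto
  hence i1: "independent {v}" by (intro independent_insertI independent_empty)
  have "u \<notin> span {v}"
  proof
    assume "u \<in> span {v}"
    then obtain r where "u = sc r v" by (auto simp: span_singleton)
    hence "L 0 1 0 = L 0 0 r" unfolding L_def by simp
    thus False by (simp add: L_eq)
  qed
  hence i2: "independent {u,v}" using i1 by (rule independent_insertI)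
  have "e \<notin> span {u,v}"
  proof
    assume "e \<in> span {u,v}"
    then obtain l where "e - sc l u \<in> span {v}" by (auto simp: span_breakdown_eq)
    then obtain r where "e - sc l u = sc r v" by (auto simp: span_singleton)
    hence "e = L 0 l r" unfolding L_def by (simp add: algebra_simps)
    hence "L 1 0 0 = L 0 l r" unfolding L_def by simp
    thus False by (simp add: L_eq)
  qed
  hence "independent {e,u,v}" using i2 by (rule independent_insertI)
  hence "dim (span {e,u,v}) = card {e,u,v}" by (rule dim_span_eq_card_independent)
  thus ?thesis using d by simp
qed


lemma scalars_L: "scalars sc e = {L k 0 0 | k. True}"
  by (auto simp: scalars_def L_e)

lemma norm_L:
  assumes UU: "m u u = L p 0 0" and UV: "m u v = L d (-b) (-a)"
    and VU: "m v u = L (s-d) b a" and VV: "m v v = L q 0 0" and two: "(2::'f) \<noteq> 0"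
  shows "alg_norm sc m e (L g x y) = g^2 - x^2*p - y^2*q - x*y*s"
proof -
  note P = prod[OF UU UV VU VV]
  have sq: "m (L g' x y) (L g' x y) = L (g'^2 + x^2*p + y^2*q + x*y*s) (2*g'*x) (2*g'*y)" for g'
    unfolding P by (simp add: L_eq power2_eq_square algebra_simps)
  show ?thesis unfolding alg_norm_def
  proof (rule the_equality)
    show "\<exists>\<alpha> w. w \<in> im_part sc m e \<and> L g x y = sc \<alpha> e + w \<and>
          m w w = sc (\<alpha>\<^sup>2 - (g^2 - x^2*p - y^2*q - x*y*s)) e"
    proof (intro exI conjI)
      show "L 0 x y \<in> im_part sc m e"
      proof (cases "x = 0 \<and> y = 0")
        case True thus ?thesis by (simp add: im_part_def L_0)
      next
        case False
        thus ?thesis using sq[of 0] unfolding im_part_def scalars_L by (auto simp: L_eq)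
      qed
      show "L g x y = sc g e + L 0 x y" by (simp add: L_e[symmetric] L_add)
      show "m (L 0 x y) (L 0 x y) = sc (g\<^sup>2 - (g^2 - x^2*p - y^2*q - x*y*s)) e"
        using sq[of 0] by (simp add: L_e[symmetric] L_eq)
    qed
  next
    fix z assume "\<exists>\<alpha> w. w \<in> im_part sc m e \<and> L g x y = sc \<alpha> e + w \<and> m w w = sc (\<alpha>\<^sup>2 - z) e"
    then obtain al w where w: "w \<in> im_part sc m e" "L g x y = sc al e + w"
      and ww: "m w w = sc (al\<^sup>2 - z) e" by blast
    have "w = L g x y - L al 0 0" using w(2) by (simp add: L_e[symmetric])
    hence wL: "w = L (g - al) x y" by (simp add: L_diff)
    show "z = g^2 - x^2*p - y^2*q - x*y*s"
    proof (cases "w = 0")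
      case True
      hence "L (g - al) x y = L 0 0 0" using wL L_0 by simp
      hence "g = al" "x = 0" "y = 0" by (auto simp: L_eq)
      moreover have "sc (al\<^sup>2 - z) e = 0" using ww True by simp
      ultimately show ?thesis using e_nz by simp
    next
      case False
      hence nsc: "w \<notin> scalars sc e" and wsc: "m w w \<in> scalars sc e" using w(1) by (auto simp: im_part_def)
      have xy: "\<not> (x = 0 \<and> y = 0)" using nsc wL unfolding scalars_L by auto
      obtain k where "m w w = L k 0 0" using wsc unfolding scalars_L by auto
      hence "2*(g-al)*x = 0" "2*(g-al)*y = 0" using sq[of "g-al"] wL by (auto simp: L_eq)
      hence "g = al" using xy two by auto
      hence "L (al\<^sup>2 - z) 0 0 = L (x^2*p + y^2*q + x*y*s) 0 0"
        using ww sq[of 0] wL by (simp add: L_e[symmetric])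
      thus ?thesis using \<open>g = al\<close> by (simp add: L_eq algebra_simps)
    qed
  qed
qed


lemma core:
  assumes two: "(2::'f) \<noteq> 0" and flex: "flexible_alg m" and quad: "quadratic_alg sc m e"
    and UU: "m u u = sc p e" and VV: "m v v = sc q e"
    and ab: "m (sc a e + u) (sc b e + v) = sc c e"
    and ND: "\<forall>B. subalgebra sc m e B \<and> dim B = 3 \<longrightarrow> nondegenerate_on sc (alg_norm sc m e) B"
  shows "m (sc b e + v) (sc a e + u) = sc c e"
proof -
  define d where "d = c - a*b"
  have UU': "m u u = L p 0 0" and VV': "m v v = L q 0 0" using UU VV by (simp_all add: L_e)
  have "m (sc a e + u) (sc b e + v) = L (a*b) b a + m u v"
    by (simp add: addL addR scL scR unitL unitR L_def scale_scale scale_right_distrib ac_simps)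
  hence "m u v = L c 0 0 - L (a*b) b a" using ab by (simp add: L_e algebra_simps)
  hence UV: "m u v = L d (-b) (-a)" by (simp add: L_diff d_def)
  define W where "W = m u v + m v u"
  obtain a1 b1 g1 where nz1: "(a1,b1,g1) \<noteq> (0,0,0)"
    and eq1: "sc a1 e + sc b1 (u+v) + sc g1 (m (u+v) (u+v)) = 0"
    using quad unfolding quadratic_alg_def by blast
  obtain a2 b2 g2 where nz2: "(a2,b2,g2) \<noteq> (0,0,0)"
    and eq2: "sc a2 e + sc b2 (u-v) + sc g2 (m (u-v) (u-v)) = 0"
    using quad unfolding quadratic_alg_def by blast
  have s1: "m (u+v) (u+v) = L (p+q) 0 0 + W"
    by (simp add: addL addR UU' VV' W_def L_e scale_left_distrib ac_simps)
  have s2: "m (u-v) (u-v) = L (p+q) 0 0 - W"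
    by (simp add: diffL diffR UU' VV' W_def L_e scale_left_distrib algebra_simps)
  have l1: "sc a1 e + sc b1 (u+v) = L a1 b1 b1" by (simp add: L_def scale_right_distrib add.assoc)
  have l2: "sc a2 e + sc b2 (u-v) = L a2 b2 (-b2)" by (simp add: L_def scale_right_diff_distrib algebra_simps)
  have e1: "sc g1 W = L (-(a1 + g1*(p+q))) (-b1) (-b1)"
  proof -
    have "L a1 b1 b1 + L (g1*(p+q)) 0 0 + sc g1 W = 0"
      using eq1 unfolding l1 s1 by (simp add: scale_right_distrib L_scale add.assoc)
    hence "L (a1 + g1*(p+q)) b1 b1 + sc g1 W = 0" by (simp add: L_add)
    hence "sc g1 W = - L (a1 + g1*(p+q)) b1 b1" by (simp add: eq_neg_iff_add_eq_0 add.commute)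
    thus ?thesis by (simp add: L_neg)
  qed
  have e2: "sc g2 W = L (a2 + g2*(p+q)) b2 (-b2)"
  proof -
    have "L a2 b2 (-b2) + L (g2*(p+q)) 0 0 - sc g2 W = 0"
      using eq2 unfolding l2 s2 by (simp add: scale_right_diff_distrib L_scale algebra_simps)
    hence "L (a2 + g2*(p+q)) b2 (-b2) - sc g2 W = 0" by (simp add: L_add)
    thus ?thesis by simp
  qed
  have g1: "g1 \<noteq> 0"
  proof
    assume "g1 = 0"
    hence "L (-a1) (-b1) (-b1) = L 0 0 0" using e1 L_0 by simp
    thus False using nz1 \<open>g1 = 0\<close> by (simp add: L_eq)
  qed
  have g2: "g2 \<noteq> 0"
  proof
    assume "g2 = 0"
    hence "L a2 b2 (-b2) = L 0 0 0" using e2 L_0 by simp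
    thus False using nz2 \<open>g2 = 0\<close> by (simp add: L_eq)
  qed
  have W1: "W = L (-(a1 + g1*(p+q))/g1) (-b1/g1) (-b1/g1)"
    using arg_cong[OF e1, of "sc (inverse g1)"] g1 by (simp add: L_scale divide_inverse mult.commute)
  have W2: "W = L ((a2 + g2*(p+q))/g2) (b2/g2) (-b2/g2)"
    using arg_cong[OF e2, of "sc (inverse g2)"] g2 by (simp add: L_scale divide_inverse mult.commute)
  have "L (-(a1 + g1*(p+q))/g1) (-b1/g1) (-b1/g1) = L ((a2 + g2*(p+q))/g2) (b2/g2) (-b2/g2)"
    using W1 W2 by simp
  hence "-b1/g1 = b2/g2 \<and> -b1/g1 = -b2/g2" unfolding L_eq by blast
  hence "b2/g2 + b2/g2 = 0" by (metis add.right_inverse minus_divide_left)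
  hence "2 * (b2/g2) = 0" by (metis mult_2)
  hence b2: "b2/g2 = 0" using two by simp
  define s where "s = (a2 + g2*(p+q))/g2"
  have W3: "W = L s 0 0" using W2 b2 s_def by simp
  have "m v u = W - m u v" by (simp add: W_def)
  also have "\<dots> = L (s-d) (0 - -b) (0 - -a)" unfolding W3 UV L_diff ..
  finally have VU: "m v u = L (s-d) b a" by simp
  note P = prod[OF UU' UV VU VV']
  have f1: "m u (m v u) = m (m u v) u" using flex unfolding flexible_alg_def by blast
  have f2: "m v (m u v) = m (m v u) v" using flex unfolding flexible_alg_def by blast
  have F1: "b*p + a*d = - b*p - a*(s-d)" "s - d - a*b = d - a*b"
  proof -
    have "m (L 0 1 0) (L (s-d) b a) = m (L d (-b) (-a)) (L 0 1 0)"
      using f1 by (simp only: L_u VU UV)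
    note E = this[unfolded P L_eq]
    show "b*p + a*d = - b*p - a*(s-d)" using E by algebra
    show "s - d - a*b = d - a*b" using E by algebra
  qed
  have F2: "- b*(s-d) - a*q = b*d + a*q"
  proof -
    have "m (L 0 0 1) (L d (-b) (-a)) = m (L (s-d) b a) (L 0 0 1)"
      using f2 by (simp only: L_v VU UV)
    note E = this[unfolded P L_eq]
    show ?thesis using E by algebra
  qed
  have sd: "s = 2*d" using F1(2) by simp
  have "2*(b*p + a*d) = 0" using F1(1) sd by (simp add: algebra_simps)
  hence H1: "b*p + a*d = 0" using two by (metis mult_eq_0_iff)
  have "2*(b*d + a*q) = 0" using F2 sd by (simp add: algebra_simps)
  hence H2: "b*d + a*q = 0" using two by (metis mult_eq_0_iff)
  have ab0: "a = 0 \<and> b = 0"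
  proof (rule ccontr)
    assume nab: "\<not> (a = 0 \<and> b = 0)"
    define B where "B = span {e,u,v}"
    have N: "alg_norm sc m e (L g x y) = g^2 - x^2*p - y^2*q - x*y*s" for g x y
      by (rule norm_L[OF UU' UV VU VV' two])
    have sub: "subalgebra sc m e B"
      unfolding subalgebra_def B_def
    proof (intro conjI ballI)
      show "subspace (span {e,u,v})" by simp
      show "e \<in> span {e,u,v}" by (rule span_base) simp
      fix x y assume "x \<in> span {e,u,v}" "y \<in> span {e,u,v}"
      then obtain g1 x1 y1 g2 x2 y2 where "x = L g1 x1 y1" "y = L g2 x2 y2" using span_L by meson
      thus "m x y \<in> span {e,u,v}" using P L_in_span by simp
    qed
    have "nondegenerate_on sc (alg_norm sc m e) B" using ND sub dim3 B_def by blast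
    moreover have wrad: "L 0 b a \<in> radical (alg_norm sc m e) B"
      unfolding radical_def
    proof (intro CollectI conjI ballI)
      show "L 0 b a \<in> B" using L_in_span B_def by simp
      fix z assume "z \<in> B"
      then obtain g x y where z: "z = L g x y" using span_L B_def by blast
      have "polar (alg_norm sc m e) (L 0 b a) z
            = -2*x*(b*p + a*d) - 2*y*(b*d + a*q)"
        unfolding z polar_def L_add N sd by (simp add: power2_eq_square algebra_simps)
      thus "polar (alg_norm sc m e) (L 0 b a) z = 0" using H1 H2 by simp
    qed
    moreover have "L 0 b a \<noteq> 0"
      using nab L_eq[of 0 b a 0 0 0] unfolding L_0 by auto
    moreover have "alg_norm sc m e z = 0" if "z \<in> radical (alg_norm sc m e) B" for z
    proof -
      from that have zB: "z \<in> B" and pz: "polar (alg_norm sc m e) z z = 0"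
        unfolding radical_def by auto
      then obtain g x y where z: "z = L g x y" using span_L B_def by blast
      have "polar (alg_norm sc m e) z z = 2 * alg_norm sc m e z"
        unfolding z polar_def L_add N by (simp add: power2_eq_square algebra_simps)
      thus ?thesis using pz two by simp
    qed
    ultimately show False unfolding nondegenerate_on_def by auto
  qed
  have "m (sc b e + v) (sc a e + u) = L (b*a) b a + m v u"
    by (simp add: addL addR scL scR unitL unitR L_def scale_scale scale_right_distrib ac_simps)
  also have "\<dots> = L (s - d) 0 0" using ab0 VU by (simp add: L_0)
  also have "\<dots> = sc c e" using sd ab0 d_def by (simp add: L_e)
  finally show ?thesis .
qed

end

context alg begin

lemma square_shift:
  assumes two: "(2::'f) \<noteq> 0" and aa: "m a a = sc lam e + sc mu a"
  shows "m (a - sc (mu/2) e) (a - sc (mu/2) e) = sc (lam + (mu/2)*(mu/2)) e"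
proof -
  define al where "al = mu/2"
  have mu: "mu = al + al" using two unfolding al_def by (simp add: field_simps)
  have "m (a - sc al e) (a - sc al e) = m a a - sc al a - sc al a + sc (al*al) e"
    by (simp add: diffL diffR scL scR unitL unitR scale_scale algebra_simps)
  also have "\<dots> = sc (lam + al*al) e"
    unfolding aa mu scale_left_distrib by (simp add: algebra_simps)
  finally show ?thesis unfolding al_def .
qed

lemma comm:
  assumes two: "(2::'f) \<noteq> 0" and flex: "flexible_alg m" and quad: "quadratic_alg sc m e"
    and ND: "\<forall>B. subalgebra sc m e B \<and> dim B = 3 \<longrightarrow> nondegenerate_on sc (alg_norm sc m e) B"
    and ab: "m a b = sc c e"
  shows "m b a = sc c e"
proof -
  consider (A) k where "a = sc k e" | (B) k l where "b = sc k e + sc l a"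
    | (C) "\<forall>k. a \<noteq> sc k e" "\<forall>k l. b \<noteq> sc k e + sc l a" by blast
  thus ?thesis
  proof cases
    case A
    have "m a b = m b a" unfolding A by (simp add: scL scR unitL unitR)
    thus ?thesis using ab by simp
  next
    case B
    have "m a b = m b a" unfolding B by (simp add: addL addR scL scR unitL unitR)
    thus ?thesis using ab by simp
  next
    case C
    have enz: "e \<noteq> 0"
    proof
      assume "e = 0"
      hence "a = sc 0 e" using unitL[of a] by simp
      thus False using C by blast
    qed
    have quadr: "\<exists>lam mu. m x x = sc lam e + sc mu x" if nsc: "\<forall>k. x \<noteq> sc k e" for x
    proof -
      obtain a0 b0 g0 where nz: "(a0,b0,g0) \<noteq> (0,0,0)" and eq: "sc a0 e + sc b0 x + sc g0 (m x x) = 0"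
        using quad unfolding quadratic_alg_def by blast
      have g0: "g0 \<noteq> 0"
      proof
        assume g: "g0 = 0"
        show False
        proof (cases "b0 = 0")
          case True
          thus False using eq g nz enz by simp
        next
          case False
          have "sc b0 x = - sc a0 e" using eq g by (simp add: eq_neg_iff_add_eq_0 add.commute)
          hence "sc (inverse b0) (sc b0 x) = sc (inverse b0) (- sc a0 e)" by simp
          hence "x = sc (- (inverse b0 * a0)) e" using False by (simp add: scale_scale)
          thus False using nsc by blast
        qed
      qed
      have "sc g0 (m x x) = - (sc a0 e + sc b0 x)" using eq by (metis eq_neg_iff_add_eq_0 add.commute)
      hence "sc (inverse g0) (sc g0 (m x x)) = sc (inverse g0) (- (sc a0 e + sc b0 x))" by simp
      hence "m x x = sc (- (inverse g0 * a0)) e + sc (- (inverse g0 * b0)) x"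
        using g0 by (simp add: scale_scale scale_right_distrib scale_right_diff_distrib)
      thus ?thesis by blast
    qed
    have bnsc: "\<forall>k. b \<noteq> sc k e" using C(2) by (metis scale_zero_left add_0_right)
    obtain la mua where aa: "m a a = sc la e + sc mua a" using quadr C(1) by blast
    obtain lb mub where bb: "m b b = sc lb e + sc mub b" using quadr bnsc by blast
    define al where "al = mua/2"
    define be where "be = mub/2"
    define u where "u = a - sc al e"
    define v where "v = b - sc be e"
    have uu: "m u u = sc (la + al*al) e" unfolding u_def al_def by (rule square_shift[OF two aa])
    have vv: "m v v = sc (lb + be*be) e" unfolding v_def be_def by (rule square_shift[OF two bb])
    have a_eq: "a = sc al e + u" and b_eq: "b = sc be e + v" unfolding u_def v_def by simp_all
    interpret A3: alg3 sc m e u v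
    proof unfold_locales
      fix g x y assume H: "sc g e + sc x u + sc y v = 0"
      hence H': "sc (g - x*al - y*be) e + sc x a + sc y b = 0"
        unfolding u_def v_def by (simp add: scale_right_diff_distrib scale_left_diff_distrib scale_scale algebra_simps)
      have y: "y = 0"
      proof (rule ccontr)
        assume "y \<noteq> 0"
        have "sc y b = - (sc (g - x*al - y*be) e + sc x a)" using H' by (metis eq_neg_iff_add_eq_0 add.commute)
        hence "sc (inverse y) (sc y b) = sc (inverse y) (- (sc (g - x*al - y*be) e + sc x a))" by simp
        hence "b = sc (- (inverse y * (g - x*al - y*be))) e + sc (- (inverse y * x)) a"
          using \<open>y \<noteq> 0\<close> by (simp add: scale_scale scale_right_distrib scale_right_diff_distrib)
        thus False using C(2) by blast
      qed
      have x: "x = 0"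
      proof (rule ccontr)
        assume "x \<noteq> 0"
        have "sc x a = - sc (g - x*al - y*be) e" using H' y by (simp add: eq_neg_iff_add_eq_0 add.commute)
        hence "sc (inverse x) (sc x a) = sc (inverse x) (- sc (g - x*al - y*be) e)" by simp
        hence "a = sc (- (inverse x * (g - x*al - y*be))) e"
          using \<open>x \<noteq> 0\<close> by (simp add: scale_scale)
        thus False using C(1) by blast
      qed
      have "g = 0" using H' x y enz by simp
      thus "g = 0 \<and> x = 0 \<and> y = 0" using x y by simp
    qed
    have "m (sc be e + v) (sc al e + u) = sc c e"
      by (rule A3.core[OF two flex quad uu vv _ ND]) (use ab a_eq b_eq in simp)
    thus ?thesis using a_eq b_eq by simp
  qed
qed

end


theorem proposition4p4:
  fixes sc :: "'f::field \<Rightarrow> 'v::ab_group_add \<Rightarrow> 'v"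
    and m :: "'v \<Rightarrow> 'v \<Rightarrow> 'v" and e :: 'v
  assumes "(2::'f) \<noteq> 0"
    and "unital_algebra sc m e"
    and "flexible_alg m"
    and "quadratic_alg sc m e"
    and "\<forall>B. subalgebra sc m e B \<and> vector_space.dim sc B = 3
           \<longrightarrow> nondegenerate_on sc (alg_norm sc m e) B"
  shows "von_neumann_finite m e \<and> reversible m"
proof -
  have "alg sc m e" using assms(2) unfolding unital_algebra_def alg_def alg_axioms_def by blast
  then interpret A: alg sc m e .
  have c: "m b a = sc c e" if "m a b = sc c e" for a b c
    by (rule A.comm[OF assms(1,3,4,5) that])
  have "\<forall>a b. m a b = e \<longrightarrow> m b a = e"
  proof (intro allI impI)
    fix a b assume "m a b = e"
    hence "m a b = sc 1 e" by simp
    hence "m b a = sc 1 e" by (rule c)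
    thus "m b a = e" by simp
  qed
  moreover have "\<forall>a b. m a b = 0 \<longrightarrow> m b a = 0"
  proof (intro allI impI)
    fix a b assume "m a b = 0"
    hence "m a b = sc 0 e" by simp
    hence "m b a = sc 0 e" by (rule c)
    thus "m b a = 0" by simp
  qed
  ultimately show ?thesis unfolding von_neumann_finite_def reversible_def by blast
qed

end
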